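(* Let $\lambda\ge0$ and let $\gamma$ be non-decreasing with $\gamma\in L^2(0,1)$, $\int_0^1\gamma=1$ and $\gamma\not\equiv1$. Then the problem $$\sup_{h\in\mathcal M^{-1}(\mu,\sigma)}\int_0^1\big(\gamma(u)+\lambda F^{-1}(u)\big)h(u)\,du$$ has the unique solution $$h_\lambda(u)=\mu+\sigma\,\frac{\gamma(u)+\lambda F^{-1}(u)-a_\lambda}{b_\lambda},\qquad 0<u<1,$$ where $a_\lambda=\mathbb E(\gamma(U)+\lambda F^{-1}(U))$ and $b_\lambda=\operatorname{std}(\gamma(U)+\lambda F^{-1}(U))$. Moreover, $\lambda\mapsto\operatorname{corr}(F^{-1}(U),h_\lambda(U))$ is continuous on $[0,\infty)$.
   Context: $U\sim\mathcal U(0,1)$. $F$ is a distribution function on $\mathbb R$ with finite second moment, and $F^{-1}(u)=\inf\{y:F(y)\ge u\}$. For $\mu\in\mathbb R$ and $\sigma>0$, $\mathcal M^{-1}(\mu,\sigma)$ is the set of quantile functions (left-continuous inverses) of distribution functions on $\mathbb R$ with mean $\mu$ and variance $\sigma^2$. *)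

theory Defs
  imports "HOL-Probability.Probability"
begin

definition quantile :: "(real \<Rightarrow> real) \<Rightarrow> real \<Rightarrow> real" where
  "quantile F u = Inf {y. u \<le> F y}"

text \<open>Moments of f(U) for U uniform on (0,1).\<close>
definition uE :: "(real \<Rightarrow> real) \<Rightarrow> real" where
  "uE f = (LINT u:{0<..<1}|lborel. f u)"

definition uVar :: "(real \<Rightarrow> real) \<Rightarrow> real" where
  "uVar f = uE (\<lambda>u. (f u - uE f)^2)"

definition uStd :: "(real \<Rightarrow> real) \<Rightarrow> real" where
  "uStd f = sqrt (uVar f)"

definition uCov :: "(real \<Rightarrow> real) \<Rightarrow> (real \<Rightarrow> real) \<Rightarrow> real" where
  "uCov f g = uE (\<lambda>u. (f u - uE f) * (g u - uE g))"

definition uCorr :: "(real \<Rightarrow> real) \<Rightarrow> (real \<Rightarrow> real) \<Rightarrow> real" where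
  "uCorr f g = uCov f g / (uStd f * uStd g)"

definition Mset :: "real \<Rightarrow> real \<Rightarrow> (real \<Rightarrow> real) set" where
  "Mset \<mu> \<sigma> = {h. \<exists>N. real_distribution N \<and> integrable N (\<lambda>x. x^2) \<and>
      (\<integral>x. x \<partial>N) = \<mu> \<and> (\<integral>x. (x - \<mu>)^2 \<partial>N) = \<sigma>^2 \<and>
      (\<forall>u\<in>{0<..<1}. h u = quantile (cdf N) u)}"

definition hsol :: "(real \<Rightarrow> real) \<Rightarrow> (real \<Rightarrow> real) \<Rightarrow> real \<Rightarrow> real \<Rightarrow> real \<Rightarrow> real \<Rightarrow> real" where
  "hsol \<gamma> Q \<mu> \<sigma> l u =
     \<mu> + \<sigma> * (\<gamma> u + l * Q u - uE (\<lambda>v. \<gamma> v + l * Q v)) / uStd (\<lambda>v. \<gamma> v + l * Q v)"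

end

theory Submission
  imports Defs
begin


definition Om :: "real measure" where "Om = restrict_space lborel {0<..<1}"

lemma space_Om[simp]: "space Om = {0<..<1}"
  by (simp add: Om_def space_restrict_space)

lemma sets_Om: "sets Om = sets (restrict_space borel {0<..<1::real})"
  by (simp add: Om_def sets_restrict_space)

lemma prob_Om: "prob_space Om"
  unfolding Om_def
  by (auto simp add: emeasure_restrict_space space_restrict_space intro!: prob_spaceI)

lemma uE_Om: fixes f :: "real \<Rightarrow> real" shows "uE f = integral\<^sup>L Om f"
  unfolding uE_def Om_def set_lebesgue_integral_def
  by (subst integral_restrict_space) auto

lemma set_integrable_Om: fixes f :: "real \<Rightarrow> real" shows "set_integrable lborel {0<..<1} f \<longleftrightarrow> integrable Om f"
  unfolding set_integrable_def Om_def
  by (subst integrable_restrict_space) auto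

lemma AE_Om: "(AE u in lborel. u \<in> {0<..<1} \<longrightarrow> P u) \<longleftrightarrow> (AE u in Om. P u)"
  unfolding Om_def
  by (subst AE_restrict_space_iff) auto

lemma mono_meas_Om: fixes f :: "real \<Rightarrow> real" shows "mono_on {0<..<1} f \<Longrightarrow> f \<in> borel_measurable Om"
  using borel_measurable_mono_on_fnc[of "{0<..<1}" f]
  by (simp add: measurable_cong_sets[OF sets_Om refl])

definition L2 :: "(real \<Rightarrow> real) \<Rightarrow> bool" where
  "L2 f \<longleftrightarrow> f \<in> borel_measurable Om \<and> integrable Om (\<lambda>x. (f x)^2)"

lemma L2_const[simp]: "L2 (\<lambda>x. c)"
proof -
  interpret prob_space Om by (rule prob_Om)
  show ?thesis unfolding L2_def by auto
qed

lemma L2_prod: assumes "L2 f" "L2 g" shows "integrable Om (\<lambda>x. f x * g x)"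
proof -
  have i: "integrable Om (\<lambda>x. (f x)^2 + (g x)^2)" using assms unfolding L2_def by auto
  have m: "(\<lambda>x. f x * g x) \<in> borel_measurable Om" using assms unfolding L2_def by auto
  have b: "AE x in Om. norm (f x * g x) \<le> norm ((f x)^2 + (g x)^2)"
  proof (intro AE_I2)
    fix x
    have "0 \<le> (\<bar>f x\<bar> - \<bar>g x\<bar>)^2" by simp
    then have "2 * (\<bar>f x\<bar> * \<bar>g x\<bar>) \<le> \<bar>f x\<bar>^2 + \<bar>g x\<bar>^2"
      by (simp add: power2_eq_square algebra_simps)
    then have "\<bar>f x\<bar> * \<bar>g x\<bar> \<le> (f x)^2 + (g x)^2"
      by (simp add: power2_abs) (smt (verit) zero_le_power2)
    then show "norm (f x * g x) \<le> norm ((f x)^2 + (g x)^2)" by (simp add: abs_mult)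
  qed
  show ?thesis using Bochner_Integration.integrable_bound[OF i m b] .
qed

lemma L2_int: assumes "L2 f" shows "integrable Om f"
  using L2_prod[OF assms L2_const[of 1]] by simp

lemma L2_add: assumes "L2 f" "L2 g" shows "L2 (\<lambda>x. f x + g x)"
proof -
  have "(\<lambda>x. (f x + g x)^2) = (\<lambda>x. (f x)^2 + 2 * (f x * g x) + (g x)^2)"
    by (auto simp: power2_eq_square algebra_simps)
  moreover have "integrable Om (\<lambda>x. (f x)^2 + 2 * (f x * g x) + (g x)^2)"
    using assms L2_prod[OF assms] unfolding L2_def by auto
  ultimately show ?thesis using assms unfolding L2_def by auto
qed

lemma L2_cmult: assumes "L2 f" shows "L2 (\<lambda>x. c * f x)"
proof -
  have "(\<lambda>x. (c * f x)^2) = (\<lambda>x. c^2 * (f x)^2)" by (auto simp: power_mult_distrib)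
  then show ?thesis using assms unfolding L2_def by auto
qed

lemma L2_diff: assumes "L2 f" "L2 g" shows "L2 (\<lambda>x. f x - g x)"
  using L2_add[OF assms(1) L2_cmult[OF assms(2), of "-1"]] by simp

lemma quant_facts:
  assumes N: "real_distribution N" and N2: "integrable N (\<lambda>x. x^2)"
  shows "L2 (quantile (cdf N))" "integral\<^sup>L Om (quantile (cdf N)) = (\<integral>x. x \<partial>N)"
    "integral\<^sup>L Om (\<lambda>u. (quantile (cdf N) u - c)^2) = (\<integral>x. (x - c)^2 \<partial>N)"
    "mono_on {0<..<1} (quantile (cdf N))"
proof -
  interpret cdf_distribution N by (rule cdf_distribution.intro[OF N])
  have qI: "quantile (cdf N) = (\<lambda>w. Inf {x. w \<le> cdf N x})"
    by (auto simp: quantile_def fun_eq_iff)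
  have meas: "quantile (cdf N) \<in> measurable Om borel"
    unfolding qI using measurable_CI by (simp add: measurable_cong_sets[OF sets_Om refl])
  have D: "distr Om borel (quantile (cdf N)) = N"
    unfolding qI Om_def by (rule distr_I_eq_M)
  have int: "integral\<^sup>L N f = integral\<^sup>L Om (\<lambda>u. f (quantile (cdf N) u))"
    if "f \<in> borel_measurable borel" for f :: "real \<Rightarrow> real"
    using integral_distr[OF meas that] D by simp
  have intb: "integrable N f = integrable Om (\<lambda>u. f (quantile (cdf N) u))"
    if "f \<in> borel_measurable borel" for f :: "real \<Rightarrow> real"
    using integrable_distr_eq[OF meas that] D by simp
  show "L2 (quantile (cdf N))" unfolding L2_def using meas N2 intb[of "\<lambda>x. x^2"] by auto
  show "integral\<^sup>L Om (quantile (cdf N)) = (\<integral>x. x \<partial>N)" using int[of "\<lambda>x. x"] by simp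
  show "integral\<^sup>L Om (\<lambda>u. (quantile (cdf N) u - c)^2) = (\<integral>x. (x - c)^2 \<partial>N)"
    using int[of "\<lambda>x. (x - c)^2"] by simp
  show "mono_on {0<..<1} (quantile (cdf N))" unfolding qI by (rule mono_I)
qed

lemma Mset_facts:
  assumes "g \<in> Mset \<mu> \<sigma>"
  shows "L2 g" "integral\<^sup>L Om g = \<mu>" "integral\<^sup>L Om (\<lambda>u. (g u - \<mu>)^2) = \<sigma>^2"
proof -
  obtain N where N: "real_distribution N" "integrable N (\<lambda>x. x^2)"
    "(\<integral>x. x \<partial>N) = \<mu>" "(\<integral>x. (x - \<mu>)^2 \<partial>N) = \<sigma>^2"
    "\<forall>u\<in>{0<..<1}. g u = quantile (cdf N) u"
    using assms unfolding Mset_def by blast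
  note q = quant_facts[OF N(1,2)]
  have eq: "\<And>u. u \<in> space Om \<Longrightarrow> g u = quantile (cdf N) u" using N(5) by simp
  have m: "g \<in> borel_measurable Om"
  proof -
    have "g \<in> borel_measurable Om \<longleftrightarrow> quantile (cdf N) \<in> borel_measurable Om"
      by (intro measurable_cong_simp) (auto simp: eq)
    then show ?thesis using q(1) unfolding L2_def by blast
  qed
  have i: "integrable Om (\<lambda>x. (g x)^2)"
  proof -
    have "integrable Om (\<lambda>x. (g x)^2) \<longleftrightarrow> integrable Om (\<lambda>x. (quantile (cdf N) x)^2)"
      by (rule Bochner_Integration.integrable_cong) (auto simp: eq)
    then show ?thesis using q(1) unfolding L2_def by blast
  qed
  show "L2 g" using m i unfolding L2_def by auto
  show "integral\<^sup>L Om g = \<mu>"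
  proof -
    have "integral\<^sup>L Om g = integral\<^sup>L Om (quantile (cdf N))"
      by (rule Bochner_Integration.integral_cong) (auto simp: eq)
    then show ?thesis using q(2) N(3) by simp
  qed
  show "integral\<^sup>L Om (\<lambda>u. (g u - \<mu>)^2) = \<sigma>^2"
  proof -
    have "integral\<^sup>L Om (\<lambda>u. (g u - \<mu>)^2) = integral\<^sup>L Om (\<lambda>u. (quantile (cdf N) u - \<mu>)^2)"
      by (rule Bochner_Integration.integral_cong) (auto simp: eq)
    then show ?thesis using q(3)[of \<mu>] N(4) by simp
  qed
qed

lemma key:
  assumes W: "L2 W" and g: "L2 g" and gm: "integral\<^sup>L Om g = \<mu>"
    and gv: "integral\<^sup>L Om (\<lambda>u. (g u - \<mu>)^2) = \<sigma>^2" and s: "\<sigma> > 0"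
    and v: "v = integral\<^sup>L Om (\<lambda>u. (W u)^2)" and vp: "v > 0"
  shows "integral\<^sup>L Om (\<lambda>u. W u * (g u - \<mu>)) \<le> \<sigma> * sqrt v"
    and "integral\<^sup>L Om (\<lambda>u. W u * (g u - \<mu>)) = \<sigma> * sqrt v \<Longrightarrow>
         AE u in Om. g u = \<mu> + \<sigma> / sqrt v * W u"
proof -
  interpret prob_space Om by (rule prob_Om)
  define K where "K = \<sigma> / sqrt v"
  define C where "C = integral\<^sup>L Om (\<lambda>u. W u * (g u - \<mu>))"
  have gc: "L2 (\<lambda>u. g u - \<mu>)" using L2_diff[OF g L2_const] .
  have i1: "integrable Om (\<lambda>u. (W u)^2)" using W unfolding L2_def by auto
  have i2: "integrable Om (\<lambda>u. W u * (g u - \<mu>))" using L2_prod[OF W gc] .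
  have i3: "integrable Om (\<lambda>u. (g u - \<mu>)^2)" using gc unfolding L2_def by auto
  have Dsq: "(\<lambda>u. (K * W u - (g u - \<mu>))^2) = (\<lambda>u. K^2 * (W u)^2 - 2 * K * (W u * (g u - \<mu>)) + (g u - \<mu>)^2)"
    by (auto simp: power2_eq_square algebra_simps)
  have iD: "integrable Om (\<lambda>u. (K * W u - (g u - \<mu>))^2)"
    unfolding Dsq using i1 i2 i3 by auto
  have ED: "integral\<^sup>L Om (\<lambda>u. (K * W u - (g u - \<mu>))^2) = K^2 * v - 2 * K * C + \<sigma>^2"
    unfolding Dsq C_def v gv[symmetric] using i1 i2 i3 by simp
  have Kv: "K^2 * v = \<sigma>^2" using vp by (simp add: K_def power_divide)
  have Kp: "K > 0" using s vp by (simp add: K_def)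
  have nn: "0 \<le> integral\<^sup>L Om (\<lambda>u. (K * W u - (g u - \<mu>))^2)" by simp
  have "K * C \<le> \<sigma>^2" using nn ED Kv by simp
  then have "C \<le> \<sigma>^2 / K" using Kp by (simp add: field_simps)
  also have "\<sigma>^2 / K = \<sigma> * sqrt v" using vp s by (simp add: K_def power2_eq_square field_simps)
  finally show "integral\<^sup>L Om (\<lambda>u. W u * (g u - \<mu>)) \<le> \<sigma> * sqrt v" by (simp add: C_def)
  assume eq: "integral\<^sup>L Om (\<lambda>u. W u * (g u - \<mu>)) = \<sigma> * sqrt v"
  have "K * C = \<sigma>^2" using eq vp by (simp add: C_def K_def power2_eq_square)
  then have "integral\<^sup>L Om (\<lambda>u. (K * W u - (g u - \<mu>))^2) = 0" using ED Kv by simp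
  then have "AE u in Om. (K * W u - (g u - \<mu>))^2 = 0"
    using integral_nonneg_eq_0_iff_AE[OF iD] by simp
  then show "AE u in Om. g u = \<mu> + \<sigma> / sqrt v * W u"
    by (rule AE_mp) (auto simp: K_def)
qed

lemma measure_Om_ioc: "0 < a \<Longrightarrow> a < 1 \<Longrightarrow> measure Om {0<..a} = a"
  unfolding Om_def by (subst measure_restrict_space) auto

lemma measure_Om_ioo: "0 < a \<Longrightarrow> a < 1 \<Longrightarrow> measure Om {0<..<a} = a"
  unfolding Om_def by (subst measure_restrict_space) auto

lemma exist:
  fixes f :: "real \<Rightarrow> real"
  assumes mono: "mono_on {0<..<1} f" and f: "L2 f" and fm: "integral\<^sup>L Om f = \<mu>"
    and fv: "integral\<^sup>L Om (\<lambda>u. (f u - \<mu>)^2) = \<sigma>^2"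
  shows "\<exists>h\<in>Mset \<mu> \<sigma>. AE u in Om. h u = f u"
proof -
  interpret Om: prob_space Om by (rule prob_Om)
  define N where "N = distr Om borel f"
  have fmeas: "f \<in> measurable Om borel" using f unfolding L2_def by auto
  have RN: "real_distribution N"
    unfolding real_distribution_def real_distribution_axioms_def N_def
    using fmeas by (auto intro: Om.prob_space_distr)
  have intb: "integrable N g = integrable Om (\<lambda>u. g (f u))"
    if "g \<in> borel_measurable borel" for g :: "real \<Rightarrow> real"
    using integrable_distr_eq[OF fmeas that] by (simp add: N_def)
  have int: "integral\<^sup>L N g = integral\<^sup>L Om (\<lambda>u. g (f u))"
    if "g \<in> borel_measurable borel" for g :: "real \<Rightarrow> real"
    using integral_distr[OF fmeas that] by (simp add: N_def)
  have cdfN: "cdf N y = measure Om {u\<in>{0<..<1}. f u \<le> y}" for y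
    unfolding cdf_def N_def using measure_distr[OF fmeas, of "{..y}"]
    by (simp add: vimage_def Int_def conj_commute)
  have Sm: "{u\<in>{0<..<1}. f u \<le> y} \<in> sets Om" for y
  proof -
    have "f -` {..y} \<inter> space Om \<in> sets Om" using fmeas by (rule measurable_sets) auto
    then show ?thesis by (simp add: vimage_def Int_def conj_commute)
  qed
  have qeq: "quantile (cdf N) u = f u" if u: "u \<in> {0<..<1}" "isCont f u" for u
  proof (unfold quantile_def, rule cInf_eq_minimum)
    have sub: "{0<..u} \<subseteq> {v\<in>{0<..<1}. f v \<le> f u}"
      using u(1) by (auto intro: mono_onD[OF mono])
    have "u = measure Om {0<..u}" using u by (simp add: measure_Om_ioc)
    also have "\<dots> \<le> measure Om {v\<in>{0<..<1}. f v \<le> f u}"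
      by (rule Om.finite_measure_mono[OF sub Sm])
    finally show "f u \<in> {y. u \<le> cdf N y}" by (simp add: cdfN)
  next
    fix y assume "y \<in> {y. u \<le> cdf N y}"
    then have uy: "u \<le> cdf N y" by simp
    show "f u \<le> y"
    proof (rule ccontr)
      assume "\<not> f u \<le> y"
      then have yl: "y < f u" by simp
      have "(f \<longlongrightarrow> f u) (at_left u)"
        using u(2) by (simp add: isCont_def filterlim_at_split)
      then have "eventually (\<lambda>w. y < f w) (at_left u)"
        using yl by (rule order_tendstoD(1))
      then obtain b where b: "b < u" "\<And>z. z > b \<Longrightarrow> z < u \<Longrightarrow> y < f z"
        unfolding eventually_at_left_field by blast
      define w where "w = (max b 0 + u) / 2"
      have w: "0 < w" "w < u" "b < w" using b u(1) by (auto simp: w_def)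
      have fw: "y < f w" using b(2)[OF w(3) w(2)] .
      have sub: "{v\<in>{0<..<1}. f v \<le> y} \<subseteq> {0<..<w}"
      proof
        fix v assume v: "v \<in> {v\<in>{0<..<1}. f v \<le> y}"
        have "v < w"
        proof (rule ccontr)
          assume "\<not> v < w"
          then have "f w \<le> f v" using v w u(1) by (intro mono_onD[OF mono]) auto
          then show False using v fw by simp
        qed
        then show "v \<in> {0<..<w}" using v by auto
      qed
      have "cdf N y \<le> measure Om {0<..<w}"
        unfolding cdfN by (rule Om.finite_measure_mono[OF sub]) (use w u(1) in \<open>auto simp add: Om_def sets_restrict_space_iff\<close>)
      also have "\<dots> = w" using w u(1) by (simp add: measure_Om_ioo)
      finally show False using uy w by simp
    qed
  qed
  define D where "D = {u\<in>{0<..<1}. \<not> isCont f u}"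
  have "countable D" unfolding D_def by (rule mono_on_ctble_discont_open[OF _ mono]) auto
  then have "AE u in lborel. u \<notin> D" by (intro AE_not_in countable_imp_null_set_lborel)
  then have "AE u in lborel. u \<in> {0<..<1} \<longrightarrow> u \<notin> D" by (rule AE_mp) auto
  then have AED: "AE u in Om. u \<notin> D" using AE_Om[of "\<lambda>u. u \<notin> D"] by simp
  have "AE u in Om. quantile (cdf N) u = f u"
    using AED by (rule AE_mp) (auto intro!: AE_I2 qeq simp: D_def)
  moreover have "quantile (cdf N) \<in> Mset \<mu> \<sigma>"
    unfolding Mset_def
  proof (intro CollectI exI[of _ N] conjI)
    show "real_distribution N" by (rule RN)
    show "integrable N (\<lambda>x. x^2)" using intb[of "\<lambda>x. x^2"] f unfolding L2_def by simp
    show "(\<integral>x. x \<partial>N) = \<mu>" using int[of "\<lambda>x. x"] fm by simp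
    show "(\<integral>x. (x - \<mu>)^2 \<partial>N) = \<sigma>^2" using int[of "\<lambda>x. (x - \<mu>)^2"] fv by simp
  qed auto
  ultimately show ?thesis by blast
qed

lemma mono_AE_const:
  fixes f :: "real \<Rightarrow> real"
  assumes mono: "mono_on {0<..<1} f" and ae: "AE u in Om. f u = c" and u0: "u0 \<in> {0<..<1}"
  shows "f u0 = c"
proof (rule ccontr)
  assume ne: "f u0 \<noteq> c"
  obtain N where N: "{x \<in> space Om. \<not> f x = c} \<subseteq> N" "N \<in> null_sets Om"
    using ae unfolding eventually_ae_filter by blast
  have "\<exists>A. A \<subseteq> N \<and> 0 < measure Om A \<and> A \<in> sets Om"
  proof (cases "f u0 < c")
    case True
    have "{0<..u0} \<subseteq> N"
    proof
      fix v assume v: "v \<in> {0<..u0}"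
      then have "f v \<le> f u0" using u0 by (intro mono_onD[OF mono]) auto
      then show "v \<in> N" using N(1) v u0 True by auto
    qed
    moreover have "measure Om {0<..u0} = u0" using u0 by (simp add: measure_Om_ioc)
    moreover have "{0<..u0} \<in> sets Om" using u0 by (auto simp: Om_def sets_restrict_space_iff)
    ultimately show ?thesis using u0 by (intro exI[of _ "{0<..u0}"]) auto
  next
    case False
    then have gt: "c < f u0" using ne by simp
    have "{u0..<1} \<subseteq> N"
    proof
      fix v assume v: "v \<in> {u0..<1}"
      then have "f u0 \<le> f v" using u0 by (intro mono_onD[OF mono]) auto
      then show "v \<in> N" using N(1) v u0 gt by auto
    qed
    moreover have "measure Om {u0..<1} = 1 - u0"
      using u0 unfolding Om_def by (subst measure_restrict_space) auto
    moreover have "{u0..<1} \<in> sets Om" using u0 by (auto simp: Om_def sets_restrict_space_iff)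
    ultimately show ?thesis using u0 by (intro exI[of _ "{u0..<1}"]) auto
  qed
  then obtain A where A: "A \<subseteq> N" "0 < measure Om A" "A \<in> sets Om" by blast
  have "A \<in> null_sets Om" using A(1,3) N(2) by (meson null_sets_subset)
  then show False using A(2) by (simp add: measure_eq_0_null_sets)
qed

lemma EZ:
  assumes W: "L2 W" and g: "L2 g" and EW: "integral\<^sup>L Om W = 0" and Eg: "integral\<^sup>L Om g = \<mu>"
  shows "integral\<^sup>L Om (\<lambda>u. (W u + c) * g u) = integral\<^sup>L Om (\<lambda>u. W u * (g u - \<mu>)) + c * \<mu>"
proof -
  interpret prob_space Om by (rule prob_Om)
  have gc: "L2 (\<lambda>u. g u - \<mu>)" using L2_diff[OF g L2_const] .
  have e: "(\<lambda>u. (W u + c) * g u) = (\<lambda>u. W u * (g u - \<mu>) + \<mu> * W u + c * g u)"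
    by (auto simp: algebra_simps)
  show ?thesis unfolding e using L2_prod[OF W gc] L2_int[OF W] L2_int[OF g] EW Eg by simp
qed

lemma lin_exp:
  assumes X: "L2 X" and Y: "L2 Y" and V: "L2 V"
  shows "integral\<^sup>L Om (\<lambda>u. X u * (Y u + l * V u)) = integral\<^sup>L Om (\<lambda>u. X u * Y u) + l * integral\<^sup>L Om (\<lambda>u. X u * V u)"
proof -
  have e: "(\<lambda>u. X u * (Y u + l * V u)) = (\<lambda>u. X u * Y u + l * (X u * V u))"
    by (auto simp: algebra_simps)
  show ?thesis unfolding e using L2_prod[OF X Y] L2_prod[OF X V] by simp
qed

lemma sq_exp:
  assumes Y: "L2 Y" and V: "L2 V"
  shows "integral\<^sup>L Om (\<lambda>u. (Y u + l * V u)^2) = integral\<^sup>L Om (\<lambda>u. (Y u)^2) + 2 * l * integral\<^sup>L Om (\<lambda>u. V u * Y u) + l^2 * integral\<^sup>L Om (\<lambda>u. (V u)^2)"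
proof -
  have e: "(\<lambda>u. (Y u + l * V u)^2) = (\<lambda>u. (Y u)^2 + 2 * l * (V u * Y u) + l^2 * (V u)^2)"
    by (auto simp: algebra_simps power2_eq_square)
  show ?thesis unfolding e using L2_prod[OF V Y] Y V unfolding L2_def by simp
qed



theorem lemmaB2:
  fixes M :: "real measure" and \<gamma> :: "real \<Rightarrow> real" and \<mu> \<sigma> lam :: real
  assumes "real_distribution M" and "integrable M (\<lambda>x. x^2)"
    and "\<sigma> > 0" and "lam \<ge> 0"
    and "mono_on {0<..<1} \<gamma>"
    and "set_borel_measurable lborel {0<..<1} \<gamma>"
    and "set_integrable lborel {0<..<1} (\<lambda>u. (\<gamma> u)^2)"
    and "uE \<gamma> = 1"
    and "\<exists>u\<in>{0<..<1}. \<gamma> u \<noteq> 1"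
  shows "(\<exists>h\<in>Mset \<mu> \<sigma>. AE u in lborel. u \<in> {0<..<1} \<longrightarrow>
              h u = hsol \<gamma> (quantile (cdf M)) \<mu> \<sigma> lam u)
       \<and> (\<forall>g\<in>Mset \<mu> \<sigma>.
              uE (\<lambda>u. (\<gamma> u + lam * quantile (cdf M) u) * g u)
            \<le> uE (\<lambda>u. (\<gamma> u + lam * quantile (cdf M) u) * hsol \<gamma> (quantile (cdf M)) \<mu> \<sigma> lam u))
       \<and> (\<forall>g\<in>Mset \<mu> \<sigma>.
              uE (\<lambda>u. (\<gamma> u + lam * quantile (cdf M) u) * g u)
            = uE (\<lambda>u. (\<gamma> u + lam * quantile (cdf M) u) * hsol \<gamma> (quantile (cdf M)) \<mu> \<sigma> lam u)
            \<longrightarrow> (AE u in lborel. u \<in> {0<..<1} \<longrightarrow> g u = hsol \<gamma> (quantile (cdf M)) \<mu> \<sigma> lam u))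
       \<and> continuous_on {0..} (\<lambda>l. uCorr (quantile (cdf M)) (hsol \<gamma> (quantile (cdf M)) \<mu> \<sigma> l))"
proof -
  interpret Om: prob_space Om by (rule prob_Om)
  have pOm[simp]: "measure Om {0<..<1} = 1" using Om.prob_space by simp
  define Q where "Q = quantile (cdf M)"
  note qf = quant_facts[OF assms(1,2)]
  have LQ: "L2 Q" and monoQ: "mono_on {0<..<1} Q" using qf by (auto simp: Q_def)
  have Lg: "L2 \<gamma>" unfolding L2_def using mono_meas_Om[OF assms(5)] assms(7)
    by (simp add: set_integrable_Om)
  have Eg: "integral\<^sup>L Om \<gamma> = 1" using assms(8) by (simp add: uE_Om)
  define Z where "Z l u = \<gamma> u + l * Q u" for l u
  define a where "a l = uE (Z l)" for l
  define W where "W l u = Z l u - a l" for l u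
  define v where "v l = integral\<^sup>L Om (\<lambda>u. (W l u)^2)" for l
  have LZ: "L2 (Z l)" for l
    unfolding Z_def by (intro L2_add Lg L2_cmult LQ)
  have LW: "L2 (W l)" for l
    unfolding W_def by (intro L2_diff LZ L2_const)
  have EW: "integral\<^sup>L Om (W l) = 0" for l
    unfolding W_def a_def uE_Om using L2_int[OF LZ] by simp
  have aeq: "uE (\<lambda>v. \<gamma> v + l * Q v) = a l" for l unfolding a_def Z_def by (rule refl)
  have std: "uStd (\<lambda>v. \<gamma> v + l * Q v) = sqrt (v l)" for l
    unfolding uStd_def uVar_def aeq by (simp add: v_def W_def Z_def uE_Om)
  have hs: "hsol \<gamma> Q \<mu> \<sigma> l = (\<lambda>u. \<mu> + \<sigma> / sqrt (v l) * W l u)" for l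
    by (auto simp: hsol_def fun_eq_iff W_def Z_def aeq std)
  have monoZ: "mono_on {0<..<1} (Z l)" if "l \<ge> 0" for l
    unfolding Z_def using that
    by (intro mono_onI add_mono mult_left_mono mono_onD[OF assms(5)] mono_onD[OF monoQ]) auto
  have vpos: "v l > 0" if l: "l \<ge> 0" for l
  proof (rule ccontr)
    assume "\<not> v l > 0"
    moreover have "v l \<ge> 0" unfolding v_def by simp
    ultimately have "v l = 0" by simp
    then have "AE u in Om. (W l u)^2 = 0"
      using integral_nonneg_eq_0_iff_AE[of Om "\<lambda>u. (W l u)^2"] LW unfolding v_def L2_def by simp
    then have "AE u in Om. Z l u = a l" by (rule AE_mp) (auto simp: W_def)
    then have Zc: "Z l u = a l" if "u \<in> {0<..<1}" for u
      using mono_AE_const[OF monoZ[OF l]] that by blast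
    have gc: "\<gamma> u = \<gamma> (1/2)" if u: "u \<in> {0<..<1}" for u
    proof (cases "u \<le> 1/2")
      case True
      have "\<gamma> u \<le> \<gamma> (1/2)" using u True by (intro mono_onD[OF assms(5)]) auto
      moreover have "Q u \<le> Q (1/2)" using u True by (intro mono_onD[OF monoQ]) auto
      moreover have "\<gamma> u + l * Q u = \<gamma> (1/2) + l * Q (1/2)"
        using Zc[OF u] Zc[of "1/2"] by (simp add: Z_def)
      moreover have "l * Q u \<le> l * Q (1/2)" using l calculation(2) by (rule mult_left_mono[rotated])
      ultimately show ?thesis by linarith
    next
      case False
      have "\<gamma> (1/2) \<le> \<gamma> u" using u False by (intro mono_onD[OF assms(5)]) auto
      moreover have "Q (1/2) \<le> Q u" using u False by (intro mono_onD[OF monoQ]) auto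
      moreover have "\<gamma> u + l * Q u = \<gamma> (1/2) + l * Q (1/2)"
        using Zc[OF u] Zc[of "1/2"] by (simp add: Z_def)
      moreover have "l * Q (1/2) \<le> l * Q u" using l calculation(2) by (rule mult_left_mono[rotated])
      ultimately show ?thesis by linarith
    qed
    have "integral\<^sup>L Om \<gamma> = integral\<^sup>L Om (\<lambda>u. \<gamma> (1/2))"
    proof (rule Bochner_Integration.integral_cong)
      fix x assume "x \<in> space Om"
      then show "\<gamma> x = \<gamma> (1/2)" by (intro gc) simp
    qed simp
    then have g1: "\<gamma> (1/2) = 1" using Eg by simp
    obtain u where u: "u \<in> {0<..<1}" "\<gamma> u \<noteq> 1" using assms(9) by blast
    have "\<gamma> u = \<gamma> (1/2)" by (rule gc[OF u(1)])
    then show False using u(2) g1 by simp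
  qed
  have Kpos: "\<sigma> / sqrt (v l) > 0" if "l \<ge> 0" for l using assms(3) vpos[OF that] by simp
  have monoH: "mono_on {0<..<1} (hsol \<gamma> Q \<mu> \<sigma> lam)"
    unfolding hs
  proof (intro mono_onI add_left_mono mult_left_mono)
    fix r s :: real assume "r \<in> {0<..<1}" "s \<in> {0<..<1}" "r \<le> s"
    then show "W lam r \<le> W lam s" unfolding W_def using mono_onD[OF monoZ[OF assms(4)]] by auto
    show "0 \<le> \<sigma> / sqrt (v lam)" using Kpos[OF assms(4)] by simp
  qed
  have LH: "L2 (hsol \<gamma> Q \<mu> \<sigma> l)" for l unfolding hs by (intro L2_add L2_const L2_cmult LW)
  have EH: "integral\<^sup>L Om (hsol \<gamma> Q \<mu> \<sigma> l) = \<mu>" for l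
    unfolding hs using L2_int[OF LW] EW by simp
  have VH: "integral\<^sup>L Om (\<lambda>u. (hsol \<gamma> Q \<mu> \<sigma> l u - \<mu>)^2) = \<sigma>^2" if "l \<ge> 0" for l
  proof -
    have "integral\<^sup>L Om (\<lambda>u. (hsol \<gamma> Q \<mu> \<sigma> l u - \<mu>)^2) = (\<sigma> / sqrt (v l))^2 * v l"
    proof -
      have e: "(\<lambda>u. (hsol \<gamma> Q \<mu> \<sigma> l u - \<mu>)^2) = (\<lambda>u. (\<sigma> / sqrt (v l))^2 * (W l u)^2)"
        unfolding hs by (auto simp: power_mult_distrib power_divide)
      show ?thesis unfolding e v_def by (rule Bochner_Integration.integral_mult_right_zero)
    qed
    also have "\<dots> = \<sigma>^2" using vpos[OF that] by (simp add: power_divide)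
    finally show ?thesis .
  qed
  have Zg: "uE (\<lambda>u. (\<gamma> u + lam * Q u) * g u) = integral\<^sup>L Om (\<lambda>u. W lam u * (g u - \<mu>)) + a lam * \<mu>"
    if "L2 g" "integral\<^sup>L Om g = \<mu>" for g
  proof -
    have "uE (\<lambda>u. (\<gamma> u + lam * Q u) * g u) = integral\<^sup>L Om (\<lambda>u. (W lam u + a lam) * g u)"
      by (simp add: uE_Om W_def Z_def)
    also have "\<dots> = integral\<^sup>L Om (\<lambda>u. W lam u * (g u - \<mu>)) + a lam * \<mu>"
      by (rule EZ[OF LW[of lam] that(1) EW[of lam] that(2)])
    finally show ?thesis .
  qed
  have ZH: "uE (\<lambda>u. (\<gamma> u + lam * Q u) * hsol \<gamma> Q \<mu> \<sigma> lam u) = \<sigma> * sqrt (v lam) + a lam * \<mu>"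
  proof -
    have "integral\<^sup>L Om (\<lambda>u. W lam u * (hsol \<gamma> Q \<mu> \<sigma> lam u - \<mu>)) = \<sigma> / sqrt (v lam) * v lam"
      unfolding hs v_def by (simp add: power2_eq_square mult.left_commute)
    also have "\<dots> = \<sigma> * sqrt (v lam)"
      using vpos[OF assms(4)] by (simp add: field_simps)
    finally show ?thesis using Zg[OF LH EH] by simp
  qed
  show ?thesis unfolding Q_def[symmetric]
  proof (intro conjI ballI impI)
    obtain h where "h \<in> Mset \<mu> \<sigma>" "AE u in Om. h u = hsol \<gamma> Q \<mu> \<sigma> lam u"
      using exist[OF monoH LH EH VH[OF assms(4)]] by blast
    then show "\<exists>h\<in>Mset \<mu> \<sigma>. AE u in lborel. u \<in> {0<..<1} \<longrightarrow> h u = hsol \<gamma> Q \<mu> \<sigma> lam u"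
      using AE_Om[of "\<lambda>u. h u = hsol \<gamma> Q \<mu> \<sigma> lam u"] by blast
  next
    fix g assume g: "g \<in> Mset \<mu> \<sigma>"
    note gf = Mset_facts[OF g]
    have "integral\<^sup>L Om (\<lambda>u. W lam u * (g u - \<mu>)) \<le> \<sigma> * sqrt (v lam)"
      by (rule key(1)[OF LW gf(1) gf(2) gf(3) assms(3) v_def vpos[OF assms(4)]])
    then show "uE (\<lambda>u. (\<gamma> u + lam * Q u) * g u) \<le> uE (\<lambda>u. (\<gamma> u + lam * Q u) * hsol \<gamma> Q \<mu> \<sigma> lam u)"
      unfolding ZH Zg[OF gf(1,2)] by simp
  next
    fix g assume g: "g \<in> Mset \<mu> \<sigma>"
      and eq: "uE (\<lambda>u. (\<gamma> u + lam * Q u) * g u) = uE (\<lambda>u. (\<gamma> u + lam * Q u) * hsol \<gamma> Q \<mu> \<sigma> lam u)"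
    note gf = Mset_facts[OF g]
    have "integral\<^sup>L Om (\<lambda>u. W lam u * (g u - \<mu>)) = \<sigma> * sqrt (v lam)"
      using eq unfolding ZH Zg[OF gf(1,2)] by simp
    then have "AE u in Om. g u = \<mu> + \<sigma> / sqrt (v lam) * W lam u"
      by (rule key(2)[OF LW gf(1) gf(2) gf(3) assms(3) v_def vpos[OF assms(4)]])
    then have "AE u in Om. g u = hsol \<gamma> Q \<mu> \<sigma> lam u" by (simp add: hs)
    then show "AE u in lborel. u \<in> {0<..<1} \<longrightarrow> g u = hsol \<gamma> Q \<mu> \<sigma> lam u"
      using AE_Om[of "\<lambda>u. g u = hsol \<gamma> Q \<mu> \<sigma> lam u"] by blast
  next
    define EQ where "EQ = integral\<^sup>L Om Q"
    define QC where "QC u = Q u - EQ" for u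
    define GC where "GC u = \<gamma> u - 1" for u
    have LQC: "L2 QC" unfolding QC_def by (intro L2_diff LQ L2_const)
    have LGC: "L2 GC" unfolding GC_def by (intro L2_diff Lg L2_const)
    have aform: "a l = 1 + l * EQ" for l
      unfolding a_def uE_Om Z_def EQ_def using L2_int[OF Lg] L2_int[OF LQ] Eg by simp
    have Wform: "W l = (\<lambda>u. GC u + l * QC u)" for l
      by (auto simp: fun_eq_iff W_def Z_def aform GC_def QC_def algebra_simps)
    define c0 where "c0 = integral\<^sup>L Om (\<lambda>u. (GC u)^2)"
    define c1 where "c1 = integral\<^sup>L Om (\<lambda>u. QC u * GC u)"
    define c2 where "c2 = integral\<^sup>L Om (\<lambda>u. (QC u)^2)"
    have vform: "v l = c0 + 2 * l * c1 + l^2 * c2" for l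
      unfolding v_def Wform c0_def c1_def c2_def by (rule sq_exp[OF LGC LQC])
    have EQu: "uE Q = EQ" by (simp add: uE_Om EQ_def)
    have corr: "uCorr Q (hsol \<gamma> Q \<mu> \<sigma> l) =
        \<sigma> / sqrt (c0 + 2 * l * c1 + l^2 * c2) * (c1 + l * c2) * inverse (uStd Q * \<sigma>)"
      if l: "l \<ge> 0" for l
    proof -
      have Eh: "uE (hsol \<gamma> Q \<mu> \<sigma> l) = \<mu>" using EH by (simp add: uE_Om)
      have sh: "uStd (hsol \<gamma> Q \<mu> \<sigma> l) = \<sigma>"
        unfolding uStd_def uVar_def Eh using VH[OF l] assms(3) by (simp add: uE_Om)
      have "uCov Q (hsol \<gamma> Q \<mu> \<sigma> l) = integral\<^sup>L Om (\<lambda>u. (\<sigma> / sqrt (v l)) * (QC u * W l u))"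
      proof -
        have "uCov Q (hsol \<gamma> Q \<mu> \<sigma> l) = uE (\<lambda>u. (Q u - EQ) * (hsol \<gamma> Q \<mu> \<sigma> l u - \<mu>))"
          unfolding uCov_def Eh EQu by (rule refl)
        also have "\<dots> = integral\<^sup>L Om (\<lambda>u. (\<sigma> / sqrt (v l)) * (QC u * W l u))"
          unfolding uE_Om by (rule Bochner_Integration.integral_cong) (auto simp: hs QC_def)
        finally show ?thesis .
      qed
      also have "\<dots> = (\<sigma> / sqrt (v l)) * integral\<^sup>L Om (\<lambda>u. QC u * W l u)" by simp
      also have "integral\<^sup>L Om (\<lambda>u. QC u * W l u) = c1 + l * c2"
        unfolding Wform c1_def c2_def lin_exp[OF LQC LGC LQC] by (simp add: power2_eq_square)
      finally show ?thesis unfolding uCorr_def sh vform by (simp add: divide_inverse)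
    qed
    have P: "c0 + 2 * l * c1 + l^2 * c2 > 0" if "l \<in> {0..}" for l
      using vpos[of l] that vform[of l] by simp
    have "continuous_on {0..} (\<lambda>l. \<sigma> / sqrt (c0 + 2 * l * c1 + l^2 * c2) * (c1 + l * c2) * inverse (uStd Q * \<sigma>))"
      using P by (intro continuous_intros) (auto, metis atLeast_iff less_irrefl)
    then show "continuous_on {0..} (\<lambda>l. uCorr Q (hsol \<gamma> Q \<mu> \<sigma> l))"
      by (rule continuous_on_cong[THEN iffD1, rotated 2]) (auto simp: corr)
  qed
qed

end
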